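(* For $\kappa\in\mathbb{R}$ and $b>0$ define $$\ell(\kappa;b)=\sum_{n\in\mathbb{Z}}\ \sup_{y\in[0,1]}\ \frac{b}{(y+n+\kappa)^2+b^2}.$$ Then for each $b>0$ the function $\kappa\mapsto\ell(\kappa;b)$ is $\mathbb{Z}$-periodic and $$\sup_{\kappa\in\mathbb{R}}\ell(\kappa;b)\le\pi\Big(1+\frac1b\Big).$$ *)

theory Defs
  imports "HOL-Analysis.Analysis"
begin

definition ell_term :: "real \<Rightarrow> real \<Rightarrow> int \<Rightarrow> real" where
  "ell_term \<kappa> b n = (SUP y\<in>{0..1::real}. b / ((y + real_of_int n + \<kappa>)\<^sup>2 + b\<^sup>2))"

definition ell :: "real \<Rightarrow> real \<Rightarrow> real" where
  "ell \<kappa> b = (\<Sum>\<^sub>\<infinity>n\<in>(UNIV::int set). ell_term \<kappa> b n)"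

end

theory Submission
  imports Defs
begin

definition fb :: "real \<Rightarrow> real \<Rightarrow> real" where
  "fb b x = b / (x\<^sup>2 + b\<^sup>2)"

lemma fb_mono:
  assumes "b > 0" "y\<^sup>2 \<le> x\<^sup>2"
  shows "fb b x \<le> fb b y"
  unfolding fb_def
proof (rule divide_left_mono)
  have "0 < x\<^sup>2 + b\<^sup>2" "0 < y\<^sup>2 + b\<^sup>2" using assms by (auto intro: add_nonneg_pos)
  then show "0 < (x\<^sup>2 + b\<^sup>2) * (y\<^sup>2 + b\<^sup>2)" by simp
qed (use assms in auto)

lemma fb_le: assumes "b > 0" shows "fb b x \<le> 1 / b"
proof -
  have "fb b x \<le> fb b 0" using fb_mono[OF assms, of 0 x] by simp
  also have "fb b 0 = 1 / b" using assms by (simp add: fb_def power2_eq_square)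
  finally show ?thesis .
qed

lemma fb_nonneg: assumes "b > 0" shows "fb b x \<ge> 0"
  using assms unfolding fb_def by (auto intro!: divide_nonneg_pos add_nonneg_pos)

lemma arctan_step:
  assumes b: "b > 0" and k: "k \<ge> 1"
  shows "fb b k \<le> arctan (k / b) - arctan ((k - 1) / b)"
proof -
  have der: "((\<lambda>x. arctan (x / b)) has_real_derivative fb b x) (at x)" for x
  proof -
    have "((\<lambda>x. arctan (x / b)) has_real_derivative (1 / (1 + (x / b)\<^sup>2)) * (1 / b)) (at x)"
      using b by (auto intro!: derivative_eq_intros simp: field_simps)
    moreover have "(1 / (1 + (x / b)\<^sup>2)) * (1 / b) = fb b x"
      using b unfolding fb_def by (simp add: field_simps power2_eq_square)
    ultimately show ?thesis by simp
  qed
  obtain z where z: "k - 1 < z" "z < k"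
    "arctan (k / b) - arctan ((k - 1) / b) = (k - (k - 1)) * fb b z"
    using MVT2[of "k - 1" k "\<lambda>x. arctan (x / b)" "fb b"] der by auto
  have "z\<^sup>2 \<le> k\<^sup>2" using z k by (intro power_mono) auto
  then have "fb b k \<le> fb b z" by (rule fb_mono[OF b])
  then show ?thesis using z by simp
qed

lemma psum:
  assumes b: "b > 0"
  shows "(\<Sum>i\<le>N. fb b (real i)) \<le> 1 / b + pi / 2"
proof -
  have "(\<Sum>i\<le>N. fb b (real i)) = fb b 0 + (\<Sum>i<N. fb b (real (Suc i)))"
    by (subst sum.atMost_shift) simp
  also have "\<dots> \<le> 1 / b + (\<Sum>i<N. arctan (real (Suc i) / b) - arctan (real i / b))"
  proof (intro add_mono sum_mono)
    fix i assume "i \<in> {..<N}"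
    show "fb b (real (Suc i)) \<le> arctan (real (Suc i) / b) - arctan (real i / b)"
      using arctan_step[OF b, of "real (Suc i)"] by simp
  qed (use fb_le[OF b, of 0] in auto)
  also have "(\<Sum>i<N. arctan (real (Suc i) / b) - arctan (real i / b)) = arctan (real N / b) - arctan (real 0 / b)"
    by (rule sum_lessThan_telescope[where f = "\<lambda>i. arctan (real i / b)"])
  also have "\<dots> \<le> pi / 2" using arctan_ubound[of "real N / b"] by simp
  finally show ?thesis by simp
qed

lemma ell_term_le:
  assumes b: "b > 0" and "\<And>y. 0 \<le> y \<Longrightarrow> y \<le> 1 \<Longrightarrow> fb b (y + real_of_int n + \<kappa>) \<le> c"
  shows "ell_term \<kappa> b n \<le> c"
  unfolding ell_term_def using assms(2) unfolding fb_def
  by (intro cSUP_least) auto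

lemma ell_term_nonneg:
  assumes b: "b > 0"
  shows "ell_term \<kappa> b n \<ge> 0"
proof -
  have bdd: "bdd_above ((\<lambda>y. fb b (y + real_of_int n + \<kappa>)) ` {0..1})"
    using fb_le[OF b] by (intro bdd_aboveI2) auto
  have "0 \<le> fb b (0 + real_of_int n + \<kappa>)" by (rule fb_nonneg[OF b])
  also have "\<dots> \<le> (SUP y\<in>{0..1::real}. fb b (y + real_of_int n + \<kappa>))"
    by (rule cSUP_upper[OF _ bdd]) auto
  finally show ?thesis unfolding ell_term_def fb_def .
qed

definition u :: "real \<Rightarrow> int \<Rightarrow> real" where
  "u b n = (if n \<ge> 0 then fb b (real_of_int n) else if n = -1 then 1 / b else fb b (real_of_int n + 2))"

lemma ell_term_u:
  assumes b: "b > 0" and k: "0 \<le> \<kappa>" "\<kappa> < 1"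
  shows "ell_term \<kappa> b n \<le> u b n"
proof (rule ell_term_le[OF b])
  fix y :: real assume y: "0 \<le> y" "y \<le> 1"
  consider "n \<ge> 0" | "n = -1" | "n \<le> -2" by linarith
  then show "fb b (y + real_of_int n + \<kappa>) \<le> u b n"
  proof cases
    case 1
    have "(real_of_int n)\<^sup>2 \<le> (y + real_of_int n + \<kappa>)\<^sup>2"
      using 1 y k by (intro power_mono) auto
    then show ?thesis using 1 fb_mono[OF b] by (simp add: u_def)
  next
    case 2
    then show ?thesis using fb_le[OF b] by (simp add: u_def)
  next
    case 3
    have "(-(real_of_int n + 2))\<^sup>2 \<le> (-(y + real_of_int n + \<kappa>))\<^sup>2"
      using 3 y k by (intro power_mono) auto
    then have "(real_of_int n + 2)\<^sup>2 \<le> (y + real_of_int n + \<kappa>)\<^sup>2" by (simp only: power2_minus)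
    then show ?thesis using 3 fb_mono[OF b] by (simp add: u_def)
  qed
qed

lemma u_sum:
  assumes b: "b > 0" and F: "finite F"
  shows "sum (u b) F \<le> pi + 3 / b"
proof -
  define P where "P = F \<inter> {n. n \<ge> 0}"
  define Q where "Q = F - {n. n \<ge> 0}"
  have split: "sum (u b) F = sum (u b) P + sum (u b) Q"
    unfolding P_def Q_def using F by (rule sum.Int_Diff)
  have finP: "finite (nat ` P)" using F P_def by auto
  obtain N where N: "\<forall>i\<in>nat ` P. i \<le> N" using finP finite_nat_set_iff_bounded_le by blast
  have "sum (u b) P = sum (\<lambda>i. fb b (real i)) (nat ` P)"
  proof -
    have "inj_on nat P" unfolding P_def by (auto intro: inj_onI)
    then have "sum (\<lambda>i. fb b (real i)) (nat ` P) = sum ((\<lambda>i. fb b (real i)) \<circ> nat) P"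
      by (rule sum.reindex)
    also have "\<dots> = sum (u b) P" unfolding P_def by (intro sum.cong) (auto simp: u_def)
    finally show ?thesis by simp
  qed
  also have "\<dots> \<le> (\<Sum>i\<le>N. fb b (real i))"
    using N fb_nonneg[OF b] by (intro sum_mono2) auto
  also have "\<dots> \<le> 1 / b + pi / 2" by (rule psum[OF b])
  finally have hP: "sum (u b) P \<le> 1 / b + pi / 2" .
  define w where "w i = (if i = 0 then 1 / b else fb b (real i - 1))" for i :: nat
  define h where "h n = nat (- n - 1)" for n :: int
  have finQ: "finite (h ` Q)" using F Q_def by auto
  obtain M where M: "\<forall>i\<in>h ` Q. i \<le> M" using finQ finite_nat_set_iff_bounded_le by blast
  have "sum (u b) Q = sum w (h ` Q)"
  proof -
    have "inj_on h Q" unfolding Q_def h_def by (auto intro: inj_onI)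
    then have "sum w (h ` Q) = sum (w \<circ> h) Q" by (rule sum.reindex)
    also have "\<dots> = sum (u b) Q"
    proof (intro sum.cong refl)
      fix n assume "n \<in> Q"
      then have n: "n < 0" unfolding Q_def by auto
      show "(w \<circ> h) n = u b n"
      proof (cases "n = -1")
        case True then show ?thesis by (simp add: w_def h_def u_def)
      next
        case False
        then have "n \<le> -2" using n by linarith
        moreover have "fb b (real_of_int (- n - 1) - 1) = fb b (real_of_int n + 2)"
          unfolding fb_def by (simp add: power2_eq_square algebra_simps)
        ultimately show ?thesis by (simp add: w_def h_def u_def)
      qed
    qed
    finally show ?thesis by simp
  qed
  also have "\<dots> \<le> (\<Sum>i\<le>Suc M. w i)"
    using M fb_nonneg[OF b] b by (intro sum_mono2) (auto simp: w_def)
  also have "\<dots> = w 0 + (\<Sum>i\<le>M. w (Suc i))"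
    by (subst sum.atMost_Suc_shift) simp
  also have "\<dots> = 1 / b + (\<Sum>i\<le>M. fb b (real i))" by (simp add: w_def)
  also have "\<dots> \<le> 1 / b + (1 / b + pi / 2)" using psum[OF b, of M] by linarith
  finally have hQ: "sum (u b) Q \<le> 1 / b + (1 / b + pi / 2)" .
  show ?thesis using split hP hQ by simp
qed

lemma ell_term_shift:
  "ell_term \<kappa> b n = ell_term (\<kappa> - of_int \<lfloor>\<kappa>\<rfloor>) b (n + \<lfloor>\<kappa>\<rfloor>)"
  unfolding ell_term_def by (simp add: algebra_simps)

lemma fin_sum:
  assumes b: "b > 0" and F: "finite F"
  shows "sum (ell_term \<kappa> b) F \<le> pi + 3 / b"
proof -
  define k where "k = \<kappa> - of_int \<lfloor>\<kappa>\<rfloor>"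
  have k: "0 \<le> k" "k < 1" unfolding k_def by linarith+
  have "sum (ell_term \<kappa> b) F = sum (ell_term k b \<circ> (\<lambda>n. n + \<lfloor>\<kappa>\<rfloor>)) F"
    unfolding k_def by (intro sum.cong refl) (simp add: ell_term_shift[of \<kappa>])
  also have "\<dots> = sum (ell_term k b) ((\<lambda>n. n + \<lfloor>\<kappa>\<rfloor>) ` F)"
    by (rule sum.reindex[symmetric]) (auto intro: inj_onI)
  also have "\<dots> \<le> sum (u b) ((\<lambda>n. n + \<lfloor>\<kappa>\<rfloor>) ` F)"
    using ell_term_u[OF b k] by (intro sum_mono) auto
  also have "\<dots> \<le> pi + 3 / b" using F by (intro u_sum[OF b]) auto
  finally show ?thesis .
qed

lemma summ:
  assumes b: "b > 0"
  shows "ell_term \<kappa> b summable_on UNIV"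
  using ell_term_nonneg[OF b] fin_sum[OF b]
  by (intro nonneg_bdd_above_summable_on bdd_aboveI2) auto

lemma ell_bound:
  assumes b: "b > 0"
  shows "ell \<kappa> b \<le> pi * (1 + 1 / b)"
proof -
  have "ell \<kappa> b \<le> pi + 3 / b"
    unfolding ell_def using summ[OF b] fin_sum[OF b]
    by (intro infsum_le_finite_sums) auto
  also have "3 / b \<le> pi / b" using pi_gt3 b by (intro divide_right_mono) auto
  finally show ?thesis by (simp add: algebra_simps)
qed

theorem lemma3p2:
  fixes b :: real
  assumes "b > 0"
  shows "(\<forall>\<kappa>. ell_term \<kappa> b summable_on (UNIV::int set))
    \<and> (\<forall>\<kappa> (m::int). ell (\<kappa> + real_of_int m) b = ell \<kappa> b)
    \<and> bdd_above (range (\<lambda>\<kappa>. ell \<kappa> b))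
    \<and> (SUP \<kappa>. ell \<kappa> b) \<le> pi * (1 + 1 / b)"
proof (intro conjI allI)
  fix \<kappa> show "ell_term \<kappa> b summable_on (UNIV::int set)" by (rule summ[OF assms])
next
  fix \<kappa> :: real and m :: int
  have bij: "bij_betw (\<lambda>n. n + m) (UNIV::int set) UNIV"
    by (rule bij_betwI[where g = "\<lambda>n. n - m"]) auto
  have "ell (\<kappa> + real_of_int m) b = infsum (\<lambda>n. ell_term \<kappa> b (n + m)) UNIV"
    unfolding ell_def ell_term_def by (simp add: algebra_simps)
  also have "\<dots> = ell \<kappa> b" unfolding ell_def by (rule infsum_reindex_bij_betw[OF bij])
  finally show "ell (\<kappa> + real_of_int m) b = ell \<kappa> b" .
next
  show "bdd_above (range (\<lambda>\<kappa>. ell \<kappa> b))"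
    using ell_bound[OF assms] by (intro bdd_aboveI2) auto
next
  show "(SUP \<kappa>. ell \<kappa> b) \<le> pi * (1 + 1 / b)"
    using ell_bound[OF assms] by (intro cSUP_least) auto
qed

end
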